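(* Let $\Gamma$ be a splice diagram satisfying the edge determinant and semigroup conditions and let $(F_{v,i})$ be a splice type system for $\Gamma$. For each pair of nodes $u,v$ of $\Gamma$ and each $i\in\{1,\dots,\delta_v-2\}$: if $u=v$ then $\mathrm{in}_{w_u}(F_{v,i})=f_{v,i}$; otherwise $\mathrm{in}_{w_u}(F_{v,i})=f_{v,i}-c_{v,e,i}\,z^{m_{v,e}}$, where $e$ is the unique edge adjacent to $v$ with $e\subseteq[v,u]$.
   Context: A splice diagram is a finite tree $\Gamma$ with at least one vertex of valency $\geq3$ and no vertex of valency $2$; vertices of valency $1$ are leaves, others nodes; $\delta_v$ is the valency of $v$. For each node $v$ and edge $e$ at $v$ a positive integer weight $d_{v,e}$ is given; $d_v=\prod_{e\ni v}d_{v,e}$. For distinct vertices $u,v$, $\ell_{u,v}$ is the product of all $d_{w,e}$ with $w$ a node on the geodesic $[u,v]$ and $e$ an edge at $w$ not in $[u,v]$; $\ell_{v,v}:=d_v$. Edge determinant condition: $d_{u,v}d_{v,u}>\ell_{u,v}$ for each edge $[u,v]$ between two nodes (where $d_{u,v}$ is the weight at $u$ of the edge toward $v$). Semigroup condition: for each node $v$ and edge $e$ at $v$, $d_v\in\sum_{\lambda\in L(v,e)}\mathbb{N}\ell_{v,\lambda}$ with $L(v,e)$ the leaves $\lambda$ with $e\subseteq[v,\lambda]$. With variables $z_\lambda$ and basis vectors $w_\lambda$ of $\mathbb{R}^n$ indexed by the $n$ leaves, $w_u=\sum_\lambda\ell_{u,\lambda}w_\lambda$ for nodes $u$. Fix $\alpha_{v,e,\lambda}\in\mathbb{N}$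 with $d_v=\sum_{\lambda\in L(v,e)}\alpha_{v,e,\lambda}\ell_{v,\lambda}$, $m_{v,e}=\sum\alpha_{v,e,\lambda}w_\lambda$, $z^{m_{v,e}}=\prod z_\lambda^{\alpha_{v,e,\lambda}}$. A splice type system consists of $F_{v,i}=f_{v,i}+g_{v,i}$ ($v$ node, $1\le i\le\delta_v-2$) with $f_{v,i}=\sum_{e\ni v}c_{v,e,i}z^{m_{v,e}}$, all maximal minors of $(c_{v,e,i})_{e,i}$ nonzero, and $g_{v,i}\in\mathbb{C}\{z_\lambda\}$ whose exponents $m$ all satisfy $w_v\cdot m>d_v$ and $w_u\cdot m>\ell_{u,v}$ for nodes $u\neq v$. For $w\in\mathbb{R}_{\ge0}^n$, $\mathrm{in}_w(F)$ is the sum of the terms of $F$ of minimal $w$-weight. *)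

theory Defs
  imports "HOL-Analysis.Analysis" "HOL-Combinatorics.Permutations"
begin

(* Trees: vertex set V, symmetric irreflexive adjacency relation adj.
   An edge at a vertex w is identified with its other endpoint x (a neighbour). *)

definition nbrs :: "('v \<Rightarrow> 'v \<Rightarrow> bool) \<Rightarrow> 'v \<Rightarrow> 'v set" where
  "nbrs adj v = {x. adj v x}"

definition valency :: "('v \<Rightarrow> 'v \<Rightarrow> bool) \<Rightarrow> 'v \<Rightarrow> nat" where
  "valency adj v = card (nbrs adj v)"

definition is_path :: "'v set \<Rightarrow> ('v \<Rightarrow> 'v \<Rightarrow> bool) \<Rightarrow> 'v list \<Rightarrow> bool" where
  "is_path V adj xs \<longleftrightarrow> xs \<noteq> [] \<and> set xs \<subseteq> V \<and> distinct xs \<and>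
     (\<forall>k. Suc k < length xs \<longrightarrow> adj (xs ! k) (xs ! Suc k))"

definition is_tree :: "'v set \<Rightarrow> ('v \<Rightarrow> 'v \<Rightarrow> bool) \<Rightarrow> bool" where
  "is_tree V adj \<longleftrightarrow> finite V \<and>
     (\<forall>x y. adj x y \<longrightarrow> x \<in> V \<and> y \<in> V \<and> adj y x \<and> x \<noteq> y) \<and>
     (\<forall>u\<in>V. \<forall>v\<in>V. \<exists>!xs. is_path V adj xs \<and> hd xs = u \<and> last xs = v)"

definition geod :: "'v set \<Rightarrow> ('v \<Rightarrow> 'v \<Rightarrow> bool) \<Rightarrow> 'v \<Rightarrow> 'v \<Rightarrow> 'v set" where
  "geod V adj u v = set (THE xs. is_path V adj xs \<and> hd xs = u \<and> last xs = v)"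

definition leaves :: "'v set \<Rightarrow> ('v \<Rightarrow> 'v \<Rightarrow> bool) \<Rightarrow> 'v set" where
  "leaves V adj = {v \<in> V. valency adj v = 1}"

definition nodes :: "'v set \<Rightarrow> ('v \<Rightarrow> 'v \<Rightarrow> bool) \<Rightarrow> 'v set" where
  "nodes V adj = {v \<in> V. valency adj v \<noteq> 1}"

definition splice_diagram :: "'v set \<Rightarrow> ('v \<Rightarrow> 'v \<Rightarrow> bool) \<Rightarrow> ('v \<Rightarrow> 'v \<Rightarrow> nat) \<Rightarrow> bool" where
  "splice_diagram V adj d \<longleftrightarrow> is_tree V adj \<and> (\<exists>v\<in>V. valency adj v \<ge> 3) \<and>
     (\<forall>v\<in>V. valency adj v \<noteq> 2) \<and>
     (\<forall>v\<in>nodes V adj. \<forall>x\<in>nbrs adj v. d v x > 0)"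

definition dv :: "('v \<Rightarrow> 'v \<Rightarrow> bool) \<Rightarrow> ('v \<Rightarrow> 'v \<Rightarrow> nat) \<Rightarrow> 'v \<Rightarrow> nat" where
  "dv adj d v = (\<Prod>x\<in>nbrs adj v. d v x)"

definition ell :: "'v set \<Rightarrow> ('v \<Rightarrow> 'v \<Rightarrow> bool) \<Rightarrow> ('v \<Rightarrow> 'v \<Rightarrow> nat) \<Rightarrow> 'v \<Rightarrow> 'v \<Rightarrow> nat" where
  "ell V adj d u v = (if u = v then dv adj d v else
     (\<Prod>w\<in>geod V adj u v \<inter> nodes V adj. \<Prod>x\<in>nbrs adj w - geod V adj u v. d w x))"

definition edge_determinant_condition :: "'v set \<Rightarrow> ('v \<Rightarrow> 'v \<Rightarrow> bool) \<Rightarrow> ('v \<Rightarrow> 'v \<Rightarrow> nat) \<Rightarrow> bool" where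
  "edge_determinant_condition V adj d \<longleftrightarrow>
     (\<forall>u\<in>nodes V adj. \<forall>v\<in>nodes V adj. adj u v \<longrightarrow> d u v * d v u > ell V adj d u v)"

definition Lset :: "'v set \<Rightarrow> ('v \<Rightarrow> 'v \<Rightarrow> bool) \<Rightarrow> 'v \<Rightarrow> 'v \<Rightarrow> 'v set" where
  "Lset V adj v x = {l \<in> leaves V adj. x \<in> geod V adj v l}"

definition semigroup_condition :: "'v set \<Rightarrow> ('v \<Rightarrow> 'v \<Rightarrow> bool) \<Rightarrow> ('v \<Rightarrow> 'v \<Rightarrow> nat) \<Rightarrow> bool" where
  "semigroup_condition V adj d \<longleftrightarrow>
     (\<forall>v\<in>nodes V adj. \<forall>x\<in>nbrs adj v. \<exists>a :: 'v \<Rightarrow> nat.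
        dv adj d v = (\<Sum>l\<in>Lset V adj v x. a l * ell V adj d v l))"

text \<open>Exponent vectors are functions 'v => nat (only leaf coordinates are used);
  w_u . m for a node u.\<close>
definition wdot :: "'v set \<Rightarrow> ('v \<Rightarrow> 'v \<Rightarrow> bool) \<Rightarrow> ('v \<Rightarrow> 'v \<Rightarrow> nat) \<Rightarrow> 'v \<Rightarrow> ('v \<Rightarrow> nat) \<Rightarrow> nat" where
  "wdot V adj d u m = (\<Sum>l\<in>leaves V adj. ell V adj d u l * m l)"

definition mexp :: "'v set \<Rightarrow> ('v \<Rightarrow> 'v \<Rightarrow> bool) \<Rightarrow> ('v \<Rightarrow> 'v \<Rightarrow> 'v \<Rightarrow> nat) \<Rightarrow> 'v \<Rightarrow> 'v \<Rightarrow> ('v \<Rightarrow> nat)" where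
  "mexp V adj \<alpha> v x = (\<lambda>l. if l \<in> Lset V adj v x then \<alpha> v x l else 0)"

text \<open>Power series in the variables z_l are represented by their coefficient functions
  (exponent vector => coefficient).\<close>
type_synonym 'v series = "('v \<Rightarrow> nat) \<Rightarrow> complex"

definition mono_series :: "('v \<Rightarrow> nat) \<Rightarrow> complex \<Rightarrow> 'v series" where
  "mono_series m a = (\<lambda>m'. if m' = m then a else 0)"

definition fpart :: "'v set \<Rightarrow> ('v \<Rightarrow> 'v \<Rightarrow> bool) \<Rightarrow> ('v \<Rightarrow> 'v \<Rightarrow> 'v \<Rightarrow> nat) \<Rightarrow>
    ('v \<Rightarrow> 'v \<Rightarrow> nat \<Rightarrow> complex) \<Rightarrow> 'v \<Rightarrow> nat \<Rightarrow> 'v series" where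
  "fpart V adj \<alpha> c v i = (\<lambda>m. \<Sum>x\<in>nbrs adj v. mono_series (mexp V adj \<alpha> v x) (c v x i) m)"

definition in_form :: "(('v \<Rightarrow> nat) \<Rightarrow> nat) \<Rightarrow> 'v series \<Rightarrow> 'v series" where
  "in_form wt F = (\<lambda>m. if F m \<noteq> 0 \<and> wt m = (LEAST k. \<exists>m'. F m' \<noteq> 0 \<and> wt m' = k) then F m else 0)"

definition det_on :: "nat \<Rightarrow> (nat \<Rightarrow> nat \<Rightarrow> complex) \<Rightarrow> complex" where
  "det_on k M = (\<Sum>p | p permutes {1..k}. of_int (sign p) * (\<Prod>a\<in>{1..k}. M a (p a)))"

definition max_minors_nonzero :: "('v \<Rightarrow> 'v \<Rightarrow> bool) \<Rightarrow> ('v \<Rightarrow> 'v \<Rightarrow> nat \<Rightarrow> complex) \<Rightarrow> 'v \<Rightarrow> bool" where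
  "max_minors_nonzero adj c v \<longleftrightarrow>
     (\<forall>\<sigma>. inj_on \<sigma> {1..valency adj v - 2} \<and> \<sigma> ` {1..valency adj v - 2} \<subseteq> nbrs adj v \<longrightarrow>
        det_on (valency adj v - 2) (\<lambda>a b. c v (\<sigma> a) b) \<noteq> 0)"

definition leaf_exps :: "'v set \<Rightarrow> ('v \<Rightarrow> 'v \<Rightarrow> bool) \<Rightarrow> ('v \<Rightarrow> nat) set" where
  "leaf_exps V adj = {m. \<forall>y. m y \<noteq> 0 \<longrightarrow> y \<in> leaves V adj}"

definition convergent_series :: "'v set \<Rightarrow> ('v \<Rightarrow> 'v \<Rightarrow> bool) \<Rightarrow> 'v series \<Rightarrow> bool" where
  "convergent_series V adj g \<longleftrightarrow> (\<forall>m. g m \<noteq> 0 \<longrightarrow> m \<in> leaf_exps V adj) \<and>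
     (\<exists>r::real. r > 0 \<and>
        (\<lambda>m. norm (g m) * r ^ (\<Sum>l\<in>leaves V adj. m l)) summable_on leaf_exps V adj)"

definition g_admissible :: "'v set \<Rightarrow> ('v \<Rightarrow> 'v \<Rightarrow> bool) \<Rightarrow> ('v \<Rightarrow> 'v \<Rightarrow> nat) \<Rightarrow> 'v \<Rightarrow> 'v series \<Rightarrow> bool" where
  "g_admissible V adj d v g \<longleftrightarrow> convergent_series V adj g \<and>
     (\<forall>m. g m \<noteq> 0 \<longrightarrow> wdot V adj d v m > dv adj d v \<and>
        (\<forall>u\<in>nodes V adj. u \<noteq> v \<longrightarrow> wdot V adj d u m > ell V adj d u v))"

definition F_series :: "'v set \<Rightarrow> ('v \<Rightarrow> 'v \<Rightarrow> bool) \<Rightarrow> ('v \<Rightarrow> 'v \<Rightarrow> 'v \<Rightarrow> nat) \<Rightarrow>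
    ('v \<Rightarrow> 'v \<Rightarrow> nat \<Rightarrow> complex) \<Rightarrow> ('v \<Rightarrow> nat \<Rightarrow> 'v series) \<Rightarrow> 'v \<Rightarrow> nat \<Rightarrow> 'v series" where
  "F_series V adj \<alpha> c g v i = (\<lambda>m. fpart V adj \<alpha> c v i m + g v i m)"

definition splice_type_system :: "'v set \<Rightarrow> ('v \<Rightarrow> 'v \<Rightarrow> bool) \<Rightarrow> ('v \<Rightarrow> 'v \<Rightarrow> nat) \<Rightarrow>
    ('v \<Rightarrow> 'v \<Rightarrow> 'v \<Rightarrow> nat) \<Rightarrow> ('v \<Rightarrow> 'v \<Rightarrow> nat \<Rightarrow> complex) \<Rightarrow> ('v \<Rightarrow> nat \<Rightarrow> 'v series) \<Rightarrow> bool" where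
  "splice_type_system V adj d \<alpha> c g \<longleftrightarrow>
     (\<forall>v\<in>nodes V adj. \<forall>x\<in>nbrs adj v.
        dv adj d v = (\<Sum>l\<in>Lset V adj v x. \<alpha> v x l * ell V adj d v l)) \<and>
     (\<forall>v\<in>nodes V adj. max_minors_nonzero adj c v) \<and>
     (\<forall>v\<in>nodes V adj. \<forall>i\<in>{1..valency adj v - 2}. g_admissible V adj d v (g v i))"

end

theory Submission imports Defs begin

lemma chain_succ: "(\<forall>k. Suc k < length xs \<longrightarrow> r (xs ! k) (xs ! Suc k)) \<longleftrightarrow> successively r xs"
proof (induction r xs rule: successively.induct)
  case (3 r x y xs)
  have "(\<forall>k. Suc k < length (x # y # xs) \<longrightarrow> r ((x # y # xs) ! k) ((x # y # xs) ! Suc k))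
     \<longleftrightarrow> r x y \<and> (\<forall>k. Suc k < length (y # xs) \<longrightarrow> r ((y # xs) ! k) ((y # xs) ! Suc k))"
    (is "?L \<longleftrightarrow> ?R")
  proof
    assume L: ?L
    have "r x y" using spec[OF L, of 0] by simp
    moreover have "\<forall>k. Suc k < length (y # xs) \<longrightarrow> r ((y # xs) ! k) ((y # xs) ! Suc k)"
    proof (intro allI impI)
      fix k assume "Suc k < length (y # xs)"
      then have "Suc (Suc k) < length (x # y # xs)" by simp
      then have "r ((x # y # xs) ! Suc k) ((x # y # xs) ! Suc (Suc k))" using L by blast
      then show "r ((y # xs) ! k) ((y # xs) ! Suc k)" by simp
    qed
    ultimately show ?R by blast
  next
    assume R: ?R
    show ?L
    proof (intro allI impI)
      fix k assume k: "Suc k < length (x # y # xs)"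
      show "r ((x # y # xs) ! k) ((x # y # xs) ! Suc k)"
      proof (cases k)
        case 0 then show ?thesis using R by simp
      next
        case (Suc j) then show ?thesis using R k by simp
      qed
    qed
  qed
  then show ?case using 3 by simp
qed auto

lemma is_path_alt: "is_path V adj xs \<longleftrightarrow> xs \<noteq> [] \<and> set xs \<subseteq> V \<and> distinct xs \<and> successively adj xs"
  unfolding is_path_def chain_succ ..

locale tree =
  fixes V :: "'v set" and adj :: "'v \<Rightarrow> 'v \<Rightarrow> bool"
  assumes tr: "is_tree V adj"
begin

definition P where "P a b = (THE xs. is_path V adj xs \<and> hd xs = a \<and> last xs = b)"

lemma finV: "finite V" using tr unfolding is_tree_def by blast
lemma adjV: "adj x y \<Longrightarrow> x \<in> V \<and> y \<in> V \<and> adj y x \<and> x \<noteq> y" using tr unfolding is_tree_def by blast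

lemma adj_sym: "adj x y \<Longrightarrow> adj y x" using adjV[of x y] by simp
lemma adj_irr: "\<not> adj x x" using adjV[of x x] by blast
lemma adj_ne: "adj x y \<Longrightarrow> x \<noteq> y" using adjV[of x y] by simp

lemma P_prop: assumes "a \<in> V" "b \<in> V"
  shows "is_path V adj (P a b) \<and> hd (P a b) = a \<and> last (P a b) = b"
proof -
  have "\<exists>!xs. is_path V adj xs \<and> hd xs = a \<and> last xs = b" using tr assms unfolding is_tree_def by blast
  then show ?thesis unfolding P_def by (rule theI')
qed

lemma P_unique: assumes "is_path V adj xs" "hd xs = a" "last xs = b"
  shows "xs = P a b"
proof -
  have ab: "a \<in> V" "b \<in> V" using assms unfolding is_path_def by auto
  have "\<exists>!xs. is_path V adj xs \<and> hd xs = a \<and> last xs = b" using tr ab unfolding is_tree_def by blast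
  then show ?thesis using P_prop[OF ab] assms by blast
qed

lemma geod_P: "geod V adj a b = set (P a b)" unfolding geod_def P_def ..

lemma P_ne: "a \<in> V \<Longrightarrow> b \<in> V \<Longrightarrow> P a b \<noteq> []" using P_prop[of a b] unfolding is_path_def by simp

lemma P_set: "a \<in> V \<Longrightarrow> b \<in> V \<Longrightarrow> set (P a b) \<subseteq> V" using P_prop[of a b] unfolding is_path_def by simp

lemma P_dist: "a \<in> V \<Longrightarrow> b \<in> V \<Longrightarrow> distinct (P a b)" using P_prop[of a b] unfolding is_path_def by simp

lemma P_succ: "a \<in> V \<Longrightarrow> b \<in> V \<Longrightarrow> successively adj (P a b)" using P_prop[of a b] unfolding is_path_alt by simp

lemma P_hd: "a \<in> V \<Longrightarrow> b \<in> V \<Longrightarrow> hd (P a b) = a" using P_prop[of a b] by simp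
lemma P_last: "a \<in> V \<Longrightarrow> b \<in> V \<Longrightarrow> last (P a b) = b" using P_prop[of a b] by simp

lemma P_refl: "a \<in> V \<Longrightarrow> P a a = [a]"
  by (rule sym, rule P_unique) (auto simp: is_path_alt)

lemma P_rev: assumes "a \<in> V" "b \<in> V" shows "P b a = rev (P a b)"
proof -
  have s: "successively (\<lambda>x y. adj y x) (P a b)"
    by (rule successively_mono[OF P_succ[OF assms]]) (simp add: adjV)
  have "is_path V adj (rev (P a b))" unfolding is_path_alt
    using s P_ne[OF assms] P_set[OF assms] P_dist[OF assms] by simp
  moreover have "hd (rev (P a b)) = b" using P_last[OF assms] P_ne[OF assms] by (simp add: hd_rev)
  moreover have "last (rev (P a b)) = a" using P_hd[OF assms] P_ne[OF assms] by (simp add: last_rev)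
  ultimately have "rev (P a b) = P b a" by (rule P_unique)
  then show ?thesis by simp
qed

lemma geod_sym: "a \<in> V \<Longrightarrow> b \<in> V \<Longrightarrow> geod V adj a b = geod V adj b a"
  unfolding geod_P using P_rev[of a b] by simp

lemma P_adj: assumes "adj a y" shows "P a y = [a, y]"
proof -
  have "is_path V adj [a, y]" unfolding is_path_alt using adjV[OF assms] assms by simp
  then have "[a, y] = P a y" by (rule P_unique) simp_all
  then show ?thesis by simp
qed

lemma P_take: assumes "a \<in> V" "b \<in> V" "k < length (P a b)"
  shows "take (Suc k) (P a b) = P a (P a b ! k)"
proof (rule P_unique)
  have "is_path V adj (P a b)" using P_prop assms by blast
  then have pd: "P a b \<noteq> []" "set (P a b) \<subseteq> V" "distinct (P a b)"
     "\<forall>j. Suc j < length (P a b) \<longrightarrow> adj (P a b ! j) (P a b ! Suc j)" unfolding is_path_def by auto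
  have "\<forall>j. Suc j < length (take (Suc k) (P a b)) \<longrightarrow> adj (take (Suc k) (P a b) ! j) (take (Suc k) (P a b) ! Suc j)"
  proof (intro allI impI)
    fix j assume j: "Suc j < length (take (Suc k) (P a b))"
    then have j2: "Suc j < length (P a b)" "Suc j < Suc k" by auto
    then have "adj (P a b ! j) (P a b ! Suc j)" using pd(4) j2(1) by simp
    then show "adj (take (Suc k) (P a b) ! j) (take (Suc k) (P a b) ! Suc j)" using j2 by (simp add: nth_take)
  qed
  moreover have "set (take (Suc k) (P a b)) \<subseteq> V" using pd(2) set_take_subset by (rule order_trans[rotated])
  moreover have "take (Suc k) (P a b) \<noteq> []" using pd(1) by simp
  moreover have "distinct (take (Suc k) (P a b))" using pd(3) by simp
  ultimately show "is_path V adj (take (Suc k) (P a b))" unfolding is_path_def by blast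
  show "hd (take (Suc k) (P a b)) = a" using assms P_hd P_ne by simp
  have tn: "take (Suc k) (P a b) \<noteq> []" using pd(1) by simp
  have "length (take (Suc k) (P a b)) = Suc k" using assms(3) by simp
  then show "last (take (Suc k) (P a b)) = P a b ! k" using tn by (simp add: last_conv_nth)
qed

lemma P_len2: assumes "a \<in> V" "b \<in> V" "a \<noteq> b" shows "2 \<le> length (P a b)"
proof -
  have ne: "P a b \<noteq> []" using P_ne assms by blast
  moreover have "length (P a b) \<noteq> 1"
  proof
    assume "length (P a b) = 1"
    then obtain x where x: "P a b = [x]" by (cases "P a b") auto
    have "a = x" using P_hd[OF assms(1,2)] x by simp
    moreover have "b = x" using P_last[OF assms(1,2)] x by simp
    ultimately show False using assms(3) by simp
  qed
  moreover have "length (P a b) \<noteq> 0" using ne by simp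
  ultimately show ?thesis by arith
qed

lemma P_cons: assumes "a \<in> V" "b \<in> V" "a \<noteq> b"
  shows "P a b = a # P (P a b ! 1) b" and "adj a (P a b ! 1)" and "P a b ! 1 \<in> V"
proof -
  have l2: "2 \<le> length (P a b)" using P_len2 assms by blast
  obtain x y ys where e: "P a b = x # y # ys" using l2
    by (cases "P a b"; cases "tl (P a b)") auto
  have x: "x = a" using P_hd[OF assms(1,2)] e by simp
  have pp: "is_path V adj (P a b)" using P_prop[OF assms(1,2)] by simp
  have iP: "is_path V adj (y # ys)" using pp e unfolding is_path_alt by auto
  have lb: "last (y # ys) = b" using P_last[OF assms(1,2)] e by simp
  have "y # ys = P y b" by (rule P_unique[OF iP _ lb]) simp
  moreover have "P a b ! 1 = y" using e by simp
  ultimately show "P a b = a # P (P a b ! 1) b" using e x by simp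
  show "adj a (P a b ! 1)" using pp e x unfolding is_path_alt by simp
  show "P a b ! 1 \<in> V" using pp e unfolding is_path_alt by simp
qed

lemma P_nb_unique: assumes "a \<in> V" "b \<in> V" "y \<in> set (P a b)" "adj a y"
  shows "y = P a b ! 1"
proof -
  obtain k where k: "k < length (P a b)" "P a b ! k = y" using assms(3) by (auto simp: in_set_conv_nth)
  have "take (Suc k) (P a b) = [a, y]" using P_take[OF assms(1,2) k(1)] k(2) P_adj[OF assms(4)] by simp
  moreover have "length (take (Suc k) (P a b)) = Suc k" using k(1) by simp
  ultimately have "k = 1" by simp
  then show ?thesis using k by simp
qed

lemma nbrs_V: "nbrs adj w \<subseteq> V" unfolding nbrs_def using adjV by blast
lemma fin_nbrs: "finite (nbrs adj w)" using finite_subset[OF nbrs_V finV] .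

lemma interior_node: assumes "a \<in> V" "b \<in> V" "y \<in> set (P a b)" "y \<noteq> a" "y \<noteq> b"
  shows "y \<in> nodes V adj"
proof -
  let ?p = "P a b"
  obtain k where k: "k < length ?p" "?p ! k = y" using assms(3) by (auto simp: in_set_conv_nth)
  have ne: "?p \<noteq> []" using P_ne[OF assms(1,2)] .
  have k0: "k \<noteq> 0"
  proof
    assume "k = 0" then show False using k P_hd[OF assms(1,2)] assms(4) ne by (simp add: hd_conv_nth)
  qed
  have k1: "Suc k < length ?p"
  proof (rule ccontr)
    assume "\<not> Suc k < length ?p"
    then have "k = length ?p - 1" using k by simp
    then show False using k P_last[OF assms(1,2)] assms(5) ne by (simp add: last_conv_nth)
  qed
  have pp: "is_path V adj ?p" using P_prop[OF assms(1,2)] by simp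
  then have ch: "\<forall>j. Suc j < length ?p \<longrightarrow> adj (?p ! j) (?p ! Suc j)" unfolding is_path_def by simp
  have d: "distinct ?p" using pp unfolding is_path_def by simp
  obtain j where j: "k = Suc j" using k0 by (cases k) auto
  have A1: "adj y (?p ! j)" using ch[rule_format, of j] k j adjV by auto
  have A2: "adj y (?p ! Suc k)" using ch[rule_format, OF k1] k by simp
  have ne2: "?p ! j \<noteq> ?p ! Suc k" using d k1 j by (simp add: nth_eq_iff_index_eq)
  have yV: "y \<in> V" using A1 adjV by blast
  have "card (nbrs adj y) \<noteq> 1"
  proof
    assume "card (nbrs adj y) = 1"
    then obtain z where "nbrs adj y = {z}" by (rule card_1_singletonE)
    then have "P a b ! j = z" "P a b ! Suc k = z" using A1 A2 unfolding nbrs_def by (metis mem_Collect_eq singletonD)+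
    then show False using ne2 by simp
  qed
  then show ?thesis using yV unfolding nodes_def valency_def by simp
qed

lemma branch: assumes "v \<in> V" "a \<in> V" "b \<in> V" "a \<noteq> v" "b \<noteq> v" "P v a ! 1 \<noteq> P v b ! 1"
  shows "set (P v a) \<inter> set (P v b) = {v}"
proof -
  have "v \<in> set (P v a)" using P_hd[OF assms(1,2)] P_ne[OF assms(1,2)] by (metis list.set_sel(1))
  moreover have "v \<in> set (P v b)" using P_hd[OF assms(1,3)] P_ne[OF assms(1,3)] by (metis list.set_sel(1))
  moreover have "y = v" if y: "y \<in> set (P v a)" "y \<in> set (P v b)" for y
  proof (rule ccontr)
    assume yv: "y \<noteq> v"
    obtain k where k: "k < length (P v a)" "P v a ! k = y" using y(1) by (auto simp: in_set_conv_nth)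
    obtain k' where k': "k' < length (P v b)" "P v b ! k' = y" using y(2) by (auto simp: in_set_conv_nth)
    have t1: "take (Suc k) (P v a) = P v y" using P_take[OF assms(1,2) k(1)] k(2) by simp
    have t2: "take (Suc k') (P v b) = P v y" using P_take[OF assms(1,3) k'(1)] k'(2) by simp
    have "k \<noteq> 0"
    proof
      assume "k = 0" then show False using k yv P_hd[OF assms(1,2)] P_ne[OF assms(1,2)] by (simp add: hd_conv_nth)
    qed
    then have e1: "P v y ! 1 = P v a ! 1" using t1[symmetric] by simp
    have "k' \<noteq> 0"
    proof
      assume "k' = 0" then show False using k' yv P_hd[OF assms(1,3)] P_ne[OF assms(1,3)] by (simp add: hd_conv_nth)
    qed
    then have e2: "P v y ! 1 = P v b ! 1" using t2[symmetric] by simp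
    show False using e1 e2 assms(6) by simp
  qed
  ultimately show ?thesis by blast
qed

lemma concat: assumes "u \<in> V" "v \<in> V" "l \<in> V" "set (P u v) \<inter> set (P v l) = {v}"
  shows "P u l = P u v @ tl (P v l)"
proof (cases "v = l")
  case True
  then show ?thesis using P_refl assms by simp
next
  case False
  let ?v = "P v l ! 1"
  have c: "P v l = v # P ?v l" "adj v ?v" "?v \<in> V" using P_cons[OF assms(2,3) False] by auto
  have pu: "is_path V adj (P u v)" using P_prop[OF assms(1,2)] by simp
  have pv: "is_path V adj (P ?v l)" using P_prop[OF c(3) assms(3)] by simp
  have dv: "distinct (P v l)" using P_dist[OF assms(2,3)] .
  have "set (P u v) \<inter> set (P ?v l) = {}"
  proof -
    have "v \<notin> set (P ?v l)" using dv c(1) by (metis distinct.simps(2))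
    moreover have "set (P v l) = insert v (set (P ?v l))" using c(1) by (metis list.simps(15))
    ultimately show ?thesis using assms(4) by auto
  qed
  moreover have "last (P u v) = v" using P_last[OF assms(1,2)] .
  moreover have "hd (P ?v l) = ?v" using P_hd[OF c(3) assms(3)] .
  ultimately have "is_path V adj (P u v @ P ?v l)"
    using pu pv c(2) unfolding is_path_alt by (auto simp: successively_append_iff)
  moreover have "hd (P u v @ P ?v l) = u" using P_hd[OF assms(1,2)] P_ne[OF assms(1,2)] by simp
  moreover have "last (P u v @ P ?v l) = l" using P_last[OF c(3) assms(3)] P_ne[OF c(3) assms(3)] by simp
  ultimately have "P u v @ P ?v l = P u l" by (rule P_unique)
  moreover have t: "tl (P v l) = P ?v l" using c(1) by (metis list.sel(3))
  ultimately show ?thesis by simp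
qed

end

locale sd = tree V adj for V :: "'v set" and adj +
  fixes d :: "'v \<Rightarrow> 'v \<Rightarrow> nat"
  assumes dpos: "w \<in> nodes V adj \<Longrightarrow> adj w y \<Longrightarrow> d w y > 0"
begin

definition Dx where "Dx w S = (\<Prod>y\<in>nbrs adj w - S. d w y)"

abbreviation L where "L a b \<equiv> ell V adj d a b"
abbreviation N where "N \<equiv> nodes V adj"

lemma ell_P: "a \<noteq> b \<Longrightarrow> L a b = (\<Prod>w\<in>set (P a b) \<inter> N. \<Prod>y\<in>nbrs adj w - set (P a b). d w y)"
  unfolding ell_def geod_P by simp

lemma ell_sym: "a \<in> V \<Longrightarrow> b \<in> V \<Longrightarrow> L a b = L b a"
  unfolding ell_def using geod_sym[of a b] by simp

lemma dv_split: "adj w y \<Longrightarrow> dv adj d w = Dx w {y} * d w y"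
  unfolding dv_def Dx_def using prod.remove[OF fin_nbrs, of y w "d w"] by (simp add: nbrs_def mult.commute)

lemma Dx_pos: "w \<in> N \<Longrightarrow> Dx w S > 0"
  unfolding Dx_def by (rule prod_pos) (auto simp: nbrs_def dpos)

lemma dv_pos: "w \<in> N \<Longrightarrow> dv adj d w > 0"
  unfolding dv_def by (rule prod_pos) (auto simp: nbrs_def dpos)

lemma ell_pos: "a \<noteq> b \<Longrightarrow> L a b > 0"
  unfolding ell_P by (intro prod_pos) (auto simp: nbrs_def dpos)

lemma ell_adj: assumes "adj a b" "a \<in> N" "b \<in> N" shows "L a b = Dx a {b} * Dx b {a}"
proof -
  have ab: "a \<noteq> b" "adj b a" using adjV[OF assms(1)] by auto
  have s: "set (P a b) = {a, b}" using P_adj[OF assms(1)] by simp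
  have "L a b = (\<Prod>w\<in>{a,b}. \<Prod>y\<in>nbrs adj w - {a,b}. d w y)" using ell_P[OF ab(1)] s assms by simp
  also have "\<dots> = (\<Prod>y\<in>nbrs adj a - {a,b}. d a y) * (\<Prod>y\<in>nbrs adj b - {a,b}. d b y)" using ab by simp
  also have "nbrs adj a - {a,b} = nbrs adj a - {b}" using adj_irr[of a] unfolding nbrs_def by blast
  also have "nbrs adj b - {a,b} = nbrs adj b - {b,a}" by blast
  also have "\<dots> = nbrs adj b - {a}" using adj_irr[of b] unfolding nbrs_def by blast
  finally show ?thesis unfolding Dx_def by simp
qed

lemma extension: assumes "a \<in> N" "a' \<in> N" "adj a a'" "z \<in> V" "a' \<in> set (P a z)"
  shows "L a z * d a' a = L a' z * Dx a {a'}"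
proof (cases "a' = z")
  case True
  have "L a z * d a' a = Dx a {a'} * (Dx a' {a} * d a' a)" using ell_adj[OF assms(3,1,2)] True by simp
  also have "Dx a' {a} * d a' a = L a' z" using dv_split[of a' a] adjV[OF assms(3)] True unfolding ell_def by simp
  finally show ?thesis by simp
next
  case False
  have aV: "a \<in> V" "a' \<in> V" using adjV[OF assms(3)] by auto
  have aa: "a \<noteq> a'" using adjV[OF assms(3)] by auto
  have az: "a \<noteq> z" using assms(5) P_refl[OF aV(1)] aa by auto
  have a1: "a' = P a z ! 1" using P_nb_unique[OF aV(1) assms(4,5,3)] .
  have pc: "P a z = a # P a' z" using P_cons(1)[OF aV(1) assms(4) az] a1 by simp
  define G' where "G' = set (P a' z)"
  have G: "set (P a z) = insert a G'" unfolding G'_def by (subst pc) simp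
  have aG': "a \<notin> G'" using P_dist[OF aV(1) assms(4)] pc unfolding G'_def by (metis distinct.simps(2))
  have a'G': "a' \<in> G'" unfolding G'_def using P_hd[OF aV(2) assms(4)] P_ne[OF aV(2) assms(4)] by (metis list.set_sel(1))
  have finG': "finite (G' \<inter> N)" unfolding G'_def by simp
  have nbA: "nbrs adj a - insert a G' = nbrs adj a - {a'}"
  proof -
    have "y = a'" if "y \<in> nbrs adj a" "y \<in> insert a G'" for y
    proof -
      have ay: "adj a y" using that(1) unfolding nbrs_def by simp
      then have "y \<noteq> a" using adj_ne by metis
      then have "y \<in> set (P a z)" using that(2) G by simp
      then show ?thesis using P_nb_unique[OF aV(1) assms(4) _ ay] a1 by simp
    qed
    moreover have "a' \<in> insert a G'" using a'G' by simp
    moreover have "a \<notin> nbrs adj a" using adj_irr unfolding nbrs_def by simp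
    ultimately show ?thesis by blast
  qed
  have nbW: "nbrs adj w - insert a G' = nbrs adj w - G'" if "w \<in> G'" "w \<noteq> a'" for w
  proof -
    have "\<not> adj a w"
    proof
      assume "adj a w"
      then have "w = P a z ! 1" using P_nb_unique[OF aV(1) assms(4), of w] G that(1) by simp
      then show False using that(2) a1 by simp
    qed
    then have "a \<notin> nbrs adj w" unfolding nbrs_def using adj_sym by auto
    then show ?thesis by blast
  qed
  have nbA': "(\<Prod>y\<in>nbrs adj a' - G'. d a' y) = d a' a * (\<Prod>y\<in>nbrs adj a' - insert a G'. d a' y)"
  proof -
    have "a \<in> nbrs adj a' - G'" using aG' adj_sym[OF assms(3)] unfolding nbrs_def by simp
    have e: "nbrs adj a' - insert a G' = nbrs adj a' - G' - {a}" by blast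
    have f: "finite (nbrs adj a' - G')" using fin_nbrs by simp
    show ?thesis unfolding e using prod.remove[OF f \<open>a \<in> nbrs adj a' - G'\<close>, of "d a'"] by simp
  qed
  have "L a z = (\<Prod>w\<in>insert a (G' \<inter> N). \<Prod>y\<in>nbrs adj w - insert a G'. d w y)"
    using ell_P[OF az] G assms(1) by (simp add: insert_absorb)
  also have "\<dots> = Dx a {a'} * (\<Prod>w\<in>G' \<inter> N. \<Prod>y\<in>nbrs adj w - insert a G'. d w y)"
    using aG' nbA prod.insert[OF finG', of a "\<lambda>w. \<Prod>y\<in>nbrs adj w - insert a G'. d w y"] unfolding Dx_def by simp
  finally have e1: "L a z = Dx a {a'} * (\<Prod>w\<in>G' \<inter> N. \<Prod>y\<in>nbrs adj w - insert a G'. d w y)" .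
  have a'GN: "a' \<in> G' \<inter> N" using a'G' assms(2) by simp
  have e2: "(\<Prod>w\<in>G' \<inter> N. \<Prod>y\<in>nbrs adj w - insert a G'. d w y) =
      (\<Prod>y\<in>nbrs adj a' - insert a G'. d a' y) * (\<Prod>w\<in>G' \<inter> N - {a'}. \<Prod>y\<in>nbrs adj w - G'. d w y)"
  proof -
    have "(\<Prod>w\<in>G' \<inter> N - {a'}. \<Prod>y\<in>nbrs adj w - insert a G'. d w y) = (\<Prod>w\<in>G' \<inter> N - {a'}. \<Prod>y\<in>nbrs adj w - G'. d w y)"
      by (rule prod.cong) (auto simp: nbW)
    then show ?thesis using prod.remove[OF finG' a'GN, of "\<lambda>w. \<Prod>y\<in>nbrs adj w - insert a G'. d w y"] by simp
  qed
  have e3: "L a' z = (\<Prod>y\<in>nbrs adj a' - G'. d a' y) * (\<Prod>w\<in>G' \<inter> N - {a'}. \<Prod>y\<in>nbrs adj w - G'. d w y)"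
    using ell_P[OF False] prod.remove[OF finG' a'GN, of "\<lambda>w. \<Prod>y\<in>nbrs adj w - G'. d w y"] unfolding G'_def by simp
  show ?thesis using e1 e2 e3 nbA' by (simp add: ac_simps)
qed

lemma ell_refl: "L a a = dv adj d a" unfolding ell_def by simp

lemma NV: "x \<in> N \<Longrightarrow> x \<in> V" unfolding nodes_def by simp

lemma hd_in: "a \<in> V \<Longrightarrow> b \<in> V \<Longrightarrow> a \<in> set (P a b)"
  using P_hd P_ne by (metis list.set_sel(1))
lemma last_in: "a \<in> V \<Longrightarrow> b \<in> V \<Longrightarrow> b \<in> set (P a b)"
  using P_last P_ne by (metis last_in_set)

lemma step_node: assumes "u \<in> N" "v \<in> N" "u \<noteq> v"
  shows "P u v = u # P (P u v ! 1) v" "adj u (P u v ! 1)" "P u v ! 1 \<in> V" "P u v ! 1 \<in> N"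
    "P u v ! 1 \<in> set (P u v)"
proof -
  have uV: "u \<in> V" and vV: "v \<in> V" using assms NV by auto
  note c = P_cons[OF uV vV assms(3)]
  show "P u v = u # P (P u v ! 1) v" "adj u (P u v ! 1)" "P u v ! 1 \<in> V" using c by auto
  have m: "P u v ! 1 \<in> set (P u v)" using c(1) hd_in[OF c(3) vV] by (metis list.set_intros(2))
  show "P u v ! 1 \<in> set (P u v)" using m .
  show "P u v ! 1 \<in> N"
  proof (cases "P u v ! 1 = v")
    case True then show ?thesis using assms by simp
  next
    case False
    have "P u v ! 1 \<noteq> u" using adj_ne[OF c(2)] by simp
    then show ?thesis using interior_node[OF uV vV m] False by simp
  qed
qed

lemma case_a: assumes "u \<in> N" "v \<in> N" "l \<in> V" "set (P u v) \<inter> set (P v l) = {v}"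
  shows "dv adj d v * L u l = L u v * L v l"
  using assms
proof (induction "length (P u v)" arbitrary: u rule: less_induct)
  case less
  show ?case
  proof (cases "u = v")
    case True
    then show ?thesis using ell_refl by simp
  next
    case False
    have uV: "u \<in> V" and vV: "v \<in> V" using less.prems NV by auto
    define u' where "u' = P u v ! 1"
    note st = step_node[OF less.prems(1,2) False, folded u'_def]
    have u'V: "u' \<in> V" using st by simp
    have len: "length (P u' v) < length (P u v)" using st(1) by (metis impossible_Cons not_le_imp_less)
    have sub: "set (P u' v) \<subseteq> set (P u v)" using st(1) by (metis set_subset_Cons)
    have "v \<in> set (P u' v)" using last_in[OF u'V vV] .
    moreover have "v \<in> set (P v l)" using hd_in[OF vV less.prems(3)] .
    ultimately have int: "set (P u' v) \<inter> set (P v l) = {v}" using sub less.prems(4) by blast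
    have IH: "dv adj d v * L u' l = L u' v * L v l"
      using less.hyps[OF len st(4) less.prems(2,3) int] .
    have "P u l = P u v @ tl (P v l)" using concat[OF uV vV less.prems(3,4)] .
    then have u'l: "u' \<in> set (P u l)" using st(5) by simp
    have e1: "L u v * d u' u = L u' v * Dx u {u'}" using extension[OF less.prems(1) st(4) st(2) vV st(5)] .
    have e2: "L u l * d u' u = L u' l * Dx u {u'}" using extension[OF less.prems(1) st(4) st(2) less.prems(3) u'l] .
    have b: "d u' u > 0" using dpos[OF st(4) adj_sym[OF st(2)]] .
    have "dv adj d v * L u l * d u' u = dv adj d v * L u' l * Dx u {u'}" using e2 by (simp add: ac_simps)
    also have "\<dots> = L u' v * L v l * Dx u {u'}" using IH by simp
    also have "\<dots> = L u v * d u' u * L v l" using e1 by (simp add: ac_simps)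
    finally have "dv adj d v * L u l * d u' u = L u v * L v l * d u' u" by (simp add: ac_simps)
    then show ?thesis using b by simp
  qed
qed

lemma case_b: assumes ed: "\<And>x y. x \<in> N \<Longrightarrow> y \<in> N \<Longrightarrow> adj x y \<Longrightarrow> L x y < d x y * d y x"
  and "u \<in> N" "v \<in> N" "l \<in> V" "l \<notin> N" "u \<noteq> v" "P v u ! 1 = P v l ! 1"
  shows "L u v * L v l < dv adj d v * L u l"
  using assms(2-)
proof (induction "length (P v l)" arbitrary: v rule: less_induct)
  case less
  have uV: "u \<in> V" and vV: "v \<in> V" using less.prems NV by auto
  have vl: "v \<noteq> l" using less.prems by auto
  define v' where "v' = P v u ! 1"
  note st = step_node[OF less.prems(2,1) less.prems(5)[symmetric], folded v'_def]
  have pcl: "P v l = v # P v' l" using P_cons(1)[OF vV less.prems(3) vl] less.prems(6) v'_def by simp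
  have v'V: "v' \<in> V" using st by simp
  have v'l: "v' \<in> set (P v l)" using pcl hd_in[OF v'V less.prems(3)] by simp
  have len: "length (P v' l) < length (P v l)" using pcl by simp
  define b where "b = d v' v"
  define a where "a = d v v'"
  define D where "D = Dx v {v'}"
  define E where "E = Dx v' {v}"
  have e1: "L v u * b = L v' u * D" unfolding b_def D_def using extension[OF less.prems(2) st(4) st(2) uV st(5)] .
  have e2: "L v l * b = L v' l * D" unfolding b_def D_def using extension[OF less.prems(2) st(4) st(2) less.prems(3) v'l] .
  have H: "L u v' * L v' l \<le> dv adj d v' * L u l"
  proof (cases "v' = u")
    case True then show ?thesis using ell_refl by simp
  next
    case F1: False
    have v'l': "v' \<noteq> l" using st(4) less.prems(4) by auto
    show ?thesis
    proof (cases "P v' u ! 1 = P v' l ! 1")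
      case True
      have "L u v' * L v' l < dv adj d v' * L u l"
        using less.hyps[OF len less.prems(1) st(4) less.prems(3,4) _ True] F1 by simp
      then show ?thesis by simp
    next
      case False
      have br: "set (P v' u) \<inter> set (P v' l) = {v'}" using branch[OF v'V uV less.prems(3) not_sym[OF F1] not_sym[OF v'l'] False] by simp
      have "set (P u v') = set (P v' u)" using P_rev[OF uV v'V] by simp
      then have "dv adj d v' * L u l = L u v' * L v' l" using case_a[OF less.prems(1) st(4) less.prems(3)] br by simp
      then show ?thesis by simp
    qed
  qed
  have edv: "D * E < a * b" unfolding a_def b_def D_def E_def
    using ed[OF less.prems(2) st(4) st(2)] ell_adj[OF st(2) less.prems(2) st(4)] by simp
  have dvv: "dv adj d v = D * a" unfolding D_def a_def using dv_split[OF st(2)] .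
  have dvv': "dv adj d v' = E * b" unfolding E_def b_def using dv_split[OF adj_sym[OF st(2)]] .
  have bpos: "b > 0" unfolding b_def using dpos[OF st(4) adj_sym[OF st(2)]] .
  have Dpos: "D > 0" unfolding D_def using Dx_pos[OF less.prems(2)] .
  have Lpos: "L u l > 0" using ell_pos less.prems(1,4) by metis
  have sym1: "L u v = L v u" using ell_sym[OF uV vV] .
  have sym2: "L u v' = L v' u" using ell_sym[OF uV v'V] .
  have "L u v * L v l * (b * b) = (L v u * b) * (L v l * b)" using sym1 by (simp add: ac_simps)
  also have "\<dots> = (L u v' * L v' l) * (D * D)" using e1 e2 sym2 by (simp add: ac_simps)
  also have "\<dots> \<le> (dv adj d v' * L u l) * (D * D)" using H by (rule mult_right_mono) simp
  also have "\<dots> = (D * E) * (b * L u l * D)" using dvv' by (simp add: ac_simps)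
  also have "\<dots> < (a * b) * (b * L u l * D)" using edv bpos Lpos Dpos by simp
  also have "\<dots> = dv adj d v * L u l * (b * b)" using dvv by (simp add: ac_simps)
  finally show ?case using bpos by simp
qed

lemma leaves_sub: "leaves V adj \<subseteq> V" unfolding leaves_def by auto
lemma fin_leaves: "finite (leaves V adj)" using finite_subset[OF leaves_sub finV] .
lemma leaf_not_node: "l \<in> leaves V adj \<Longrightarrow> l \<notin> N" unfolding leaves_def nodes_def by auto
lemma Lset_sub: "Lset V adj v x \<subseteq> leaves V adj" unfolding Lset_def by auto
lemma fin_Lset: "finite (Lset V adj v x)" using finite_subset[OF Lset_sub fin_leaves] .

lemma W_mexp: "wdot V adj d u (mexp V adj \<alpha> v x) = (\<Sum>l\<in>Lset V adj v x. \<alpha> v x l * L u l)"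
proof -
  have "wdot V adj d u (mexp V adj \<alpha> v x) = (\<Sum>l\<in>leaves V adj. if l \<in> Lset V adj v x then \<alpha> v x l * L u l else 0)"
    unfolding wdot_def mexp_def by (rule sum.cong) (auto simp: ac_simps)
  also have "\<dots> = (\<Sum>l\<in>leaves V adj \<inter> Lset V adj v x. \<alpha> v x l * L u l)"
    using sum.inter_restrict[OF fin_leaves, of "\<lambda>l. \<alpha> v x l * L u l" "Lset V adj v x"] by simp
  also have "leaves V adj \<inter> Lset V adj v x = Lset V adj v x" using Lset_sub by blast
  finally show ?thesis .
qed

lemma Lset_dir: assumes "v \<in> N" "adj v x" "l \<in> Lset V adj v x"
  shows "x = P v l ! 1" "l \<in> V" "l \<notin> N" "l \<noteq> v"
proof -
  show lV: "l \<in> V" using assms(3) Lset_sub leaves_sub by blast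
  show lN: "l \<notin> N" using assms(3) Lset_sub leaf_not_node by blast
  show "l \<noteq> v" using lN assms(1) by auto
  have "x \<in> set (P v l)" using assms(3) unfolding Lset_def geod_P by simp
  then show "x = P v l ! 1" using P_nb_unique[OF NV[OF assms(1)] lV _ assms(2)] by simp
qed

lemma Lset_disj: assumes "v \<in> N" "adj v x" "adj v x'" "x \<noteq> x'"
  shows "Lset V adj v x \<inter> Lset V adj v x' = {}"
  using Lset_dir[OF assms(1,2)] Lset_dir[OF assms(1,3)] assms(4) by blast

context
  fixes \<alpha> :: "'v \<Rightarrow> 'v \<Rightarrow> 'v \<Rightarrow> nat"
  assumes alpha: "\<And>v x. v \<in> N \<Longrightarrow> adj v x \<Longrightarrow> dv adj d v = (\<Sum>l\<in>Lset V adj v x. \<alpha> v x l * L v l)"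
begin

lemma W_self: "v \<in> N \<Longrightarrow> adj v x \<Longrightarrow> wdot V adj d v (mexp V adj \<alpha> v x) = dv adj d v"
  using W_mexp alpha by simp

lemma W_other: assumes "u \<in> N" "v \<in> N" "u \<noteq> v" "adj v x" "x \<noteq> P v u ! 1"
  shows "wdot V adj d u (mexp V adj \<alpha> v x) = L u v"
proof -
  have uV: "u \<in> V" and vV: "v \<in> V" using assms NV by auto
  have "dv adj d v * wdot V adj d u (mexp V adj \<alpha> v x) = (\<Sum>l\<in>Lset V adj v x. \<alpha> v x l * (dv adj d v * L u l))"
    unfolding W_mexp by (simp add: sum_distrib_left ac_simps)
  also have "\<dots> = (\<Sum>l\<in>Lset V adj v x. \<alpha> v x l * (L u v * L v l))"
  proof (rule sum.cong)
    fix l assume l: "l \<in> Lset V adj v x"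
    note ld = Lset_dir[OF assms(2,4) l]
    have "set (P v u) \<inter> set (P v l) = {v}"
      using branch[OF vV uV ld(2) assms(3) ld(4)] assms(5) ld(1) by simp
    moreover have "set (P u v) = set (P v u)" using P_rev[OF uV vV] by simp
    ultimately show "\<alpha> v x l * (dv adj d v * L u l) = \<alpha> v x l * (L u v * L v l)"
      using case_a[OF assms(1,2) ld(2)] by simp
  qed simp
  also have "\<dots> = L u v * dv adj d v" using alpha[OF assms(2,4)] by (simp add: sum_distrib_left ac_simps)
  finally show ?thesis using dv_pos[OF assms(2)] by simp
qed

lemma W_toward: assumes ed: "\<And>x y. x \<in> N \<Longrightarrow> y \<in> N \<Longrightarrow> adj x y \<Longrightarrow> L x y < d x y * d y x"
  and "u \<in> N" "v \<in> N" "u \<noteq> v" "adj v x" "x = P v u ! 1"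
  shows "wdot V adj d u (mexp V adj \<alpha> v x) > L u v"
proof -
  have uV: "u \<in> V" and vV: "v \<in> V" using assms NV by auto
  have "L u v * dv adj d v = (\<Sum>l\<in>Lset V adj v x. \<alpha> v x l * (L u v * L v l))"
    using alpha[OF assms(3,5)] by (simp add: sum_distrib_left ac_simps)
  also have "\<dots> < (\<Sum>l\<in>Lset V adj v x. \<alpha> v x l * (dv adj d v * L u l))"
  proof (rule sum_strict_mono_ex1[OF fin_Lset])
    have lt: "L u v * L v l < dv adj d v * L u l" if l: "l \<in> Lset V adj v x" for l
    proof -
      note ld = Lset_dir[OF assms(3,5) l]
      show ?thesis using case_b[OF ed assms(2,3) ld(2,3) assms(4)] ld(1) assms(6) by simp
    qed
    then show "\<forall>l\<in>Lset V adj v x. \<alpha> v x l * (L u v * L v l) \<le> \<alpha> v x l * (dv adj d v * L u l)"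
      by (simp add: less_imp_le)
    have "(\<Sum>l\<in>Lset V adj v x. \<alpha> v x l * L v l) \<noteq> 0" using alpha[OF assms(3,5)] dv_pos[OF assms(3)] by simp
    then obtain l where l0: "l \<in> Lset V adj v x" "\<alpha> v x l * L v l \<noteq> 0" by (rule sum.not_neutral_contains_not_neutral)
    then have l: "l \<in> Lset V adj v x" "\<alpha> v x l \<noteq> 0" by auto
    then show "\<exists>l\<in>Lset V adj v x. \<alpha> v x l * (L u v * L v l) < \<alpha> v x l * (dv adj d v * L u l)"
      using lt by auto
  qed
  also have "\<dots> = dv adj d v * wdot V adj d u (mexp V adj \<alpha> v x)"
    unfolding W_mexp by (simp add: sum_distrib_left ac_simps)
  finally show ?thesis by (simp add: mult.commute)
qed

lemma mexp_inj: assumes "v \<in> N" shows "inj_on (mexp V adj \<alpha> v) (nbrs adj v)"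
proof (rule inj_onI)
  fix x x' assume x: "x \<in> nbrs adj v" and x': "x' \<in> nbrs adj v" and eq: "mexp V adj \<alpha> v x = mexp V adj \<alpha> v x'"
  show "x = x'"
  proof (rule ccontr)
    assume ne: "x \<noteq> x'"
    have ax: "adj v x" "adj v x'" using x x' unfolding nbrs_def by auto
    have dj: "Lset V adj v x \<inter> Lset V adj v x' = {}" using Lset_disj[OF assms ax ne] .
    have "mexp V adj \<alpha> v x l = 0" for l
    proof (cases "l \<in> Lset V adj v x")
      case True
      then have "l \<notin> Lset V adj v x'" using dj by blast
      then have "mexp V adj \<alpha> v x' l = 0" unfolding mexp_def by simp
      then show ?thesis using eq by simp
    next
      case False then show ?thesis unfolding mexp_def by simp
    qed
    then have "wdot V adj d v (mexp V adj \<alpha> v x) = 0" unfolding wdot_def by simp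
    then show False using W_self[OF assms ax(1)] dv_pos[OF assms] by simp
  qed
qed

end

end

lemma mono_sum_at: assumes "finite A" "inj_on M A" "x \<in> A"
  shows "(\<Sum>x'\<in>A. mono_series (M x') (C x') (M x)) = C x"
proof -
  have "(\<Sum>x'\<in>A. mono_series (M x') (C x') (M x)) = mono_series (M x) (C x) (M x) + (\<Sum>x'\<in>A - {x}. mono_series (M x') (C x') (M x))"
    using sum.remove[OF assms(1,3)] by blast
  also have "(\<Sum>x'\<in>A - {x}. mono_series (M x') (C x') (M x)) = 0"
  proof (rule sum.neutral, rule ballI)
    fix x' assume x': "x' \<in> A - {x}"
    then have "M x \<noteq> M x'" using assms(2,3) by (metis DiffE inj_on_contraD singletonI)
    then show "mono_series (M x') (C x') (M x) = 0" unfolding mono_series_def by simp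
  qed
  finally show ?thesis unfolding mono_series_def by simp
qed

lemma mono_sum_out: assumes "m \<notin> M ` A"
  shows "(\<Sum>x'\<in>A. mono_series (M x') (C x') m) = 0"
  using assms unfolding mono_series_def by (intro sum.neutral) auto

lemma generic:
  fixes W :: "('v \<Rightarrow> nat) \<Rightarrow> nat" and G :: "'v series" and C :: "'a \<Rightarrow> complex"
  assumes fA: "finite A" and SA: "S \<subseteq> A" and inj: "inj_on M A"
    and Wt: "\<And>x. x \<in> S \<Longrightarrow> W (M x) = t" and Wgt: "\<And>x. x \<in> A - S \<Longrightarrow> W (M x) > t"
    and Gt: "\<And>m. G m \<noteq> 0 \<Longrightarrow> W m > t" and ex: "\<exists>x\<in>S. C x \<noteq> 0"
  shows "in_form W (\<lambda>m. (\<Sum>x\<in>A. mono_series (M x) (C x) m) + G m) = (\<lambda>m. \<Sum>x\<in>S. mono_series (M x) (C x) m)"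
proof -
  define F where "F = (\<lambda>m. (\<Sum>x\<in>A. mono_series (M x) (C x) m) + G m)"
  have fS: "finite S" using finite_subset[OF SA fA] .
  have injS: "inj_on M S" using inj_on_subset[OF inj SA] .
  have Fge: "t \<le> W m" if "F m \<noteq> 0" for m
  proof (cases "m \<in> M ` A")
    case True
    then obtain x where x: "x \<in> A" "m = M x" by blast
    then show ?thesis using Wt Wgt by (cases "x \<in> S") (auto intro: less_imp_le)
  next
    case False
    then have "G m \<noteq> 0" using that mono_sum_out[OF False] unfolding F_def by simp
    then show ?thesis using Gt less_imp_le by blast
  qed
  obtain x0 where x0: "x0 \<in> S" "C x0 \<noteq> 0" using ex by blast
  have G0: "G (M x) = 0" if "x \<in> S" for x using Gt[of "M x"] Wt[OF that] by auto
  have Fx0: "F (M x0) \<noteq> 0 \<and> W (M x0) = t"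
    using mono_sum_at[OF fA inj, of x0 C] x0 SA G0[OF x0(1)] Wt[OF x0(1)] unfolding F_def by auto
  have lst: "(LEAST k. \<exists>m'. F m' \<noteq> 0 \<and> W m' = k) = t"
  proof (rule Least_equality)
    show "\<exists>m'. F m' \<noteq> 0 \<and> W m' = t" using Fx0 by blast
    show "\<And>y. \<exists>m'. F m' \<noteq> 0 \<and> W m' = y \<Longrightarrow> t \<le> y" using Fge by blast
  qed
  have "in_form W F m = (\<Sum>x\<in>S. mono_series (M x) (C x) m)" for m
  proof -
    have LHS: "in_form W F m = (if F m \<noteq> 0 \<and> W m = t then F m else 0)" unfolding in_form_def lst ..
    show ?thesis
    proof (cases "m \<in> M ` A")
      case True
      then obtain x where x: "x \<in> A" "m = M x" by blast
      show ?thesis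
      proof (cases "x \<in> S")
        case True
        have "F m = C x" using mono_sum_at[OF fA inj x(1), of C] G0[OF True] x(2) unfolding F_def by simp
        moreover have "W m = t" using Wt[OF True] x(2) by simp
        moreover have "(\<Sum>x\<in>S. mono_series (M x) (C x) m) = C x" using mono_sum_at[OF fS injS True, of C] x(2) by simp
        ultimately show ?thesis using LHS by simp
      next
        case False
        have "W m > t" using Wgt[of x] x False by simp
        then have "in_form W F m = 0" using LHS by simp
        moreover have "m \<notin> M ` S"
        proof
          assume "m \<in> M ` S"
          then obtain x' where "x' \<in> S" "m = M x'" by blast
          then have "x' = x" using inj x SA by (metis inj_on_contraD subsetD)
          then show False using False \<open>x' \<in> S\<close> by simp
        qed
        ultimately show ?thesis using mono_sum_out by metis
      qed
    next
      case False
      have "F m = G m" using mono_sum_out[OF False] unfolding F_def by simp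
      then have "in_form W F m = 0" using LHS Gt by auto
      moreover have "m \<notin> M ` S" using False SA by blast
      ultimately show ?thesis using mono_sum_out by metis
    qed
  qed
  then show ?thesis unfolding F_def by blast
qed

lemma minor_col: assumes mm: "max_minors_nonzero adj c v" and i: "i \<in> {1..valency adj v - 2}"
  and T: "T \<subseteq> nbrs adj v" "finite T" "valency adj v - 2 \<le> card T"
  shows "\<exists>x\<in>T. c v x i \<noteq> 0"
proof (rule ccontr)
  assume "\<not> (\<exists>x\<in>T. c v x i \<noteq> 0)"
  then have z: "\<And>x. x \<in> T \<Longrightarrow> c v x i = 0" by blast
  define k where "k = valency adj v - 2"
  obtain T' where T': "T' \<subseteq> T" "card T' = k" using obtain_subset_with_card_n[OF T(3)[folded k_def]] by blast
  have fT': "finite T'" using finite_subset[OF T'(1) T(2)] .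
  obtain h where h: "bij_betw h {1..k} T'" using ex_bij_betw_nat_finite_1[OF fT'] T'(2) by blast
  have "inj_on h {1..valency adj v - 2} \<and> h ` {1..valency adj v - 2} \<subseteq> nbrs adj v"
    using h T'(1) T(1) unfolding k_def bij_betw_def by blast
  then have ne: "det_on k (\<lambda>a b. c v (h a) b) \<noteq> 0" using mm unfolding max_minors_nonzero_def k_def by blast
  have "det_on k (\<lambda>a b. c v (h a) b) = 0"
    unfolding det_on_def
  proof (rule sum.neutral, rule ballI)
    fix p assume "p \<in> {p. p permutes {1..k}}"
    then have pp: "p permutes {1..k}" by simp
    have "i \<in> p ` {1..k}" using permutes_image[OF pp] i unfolding k_def by simp
    then obtain a where a: "a \<in> {1..k}" "p a = i" by blast
    have "h a \<in> T" using h a(1) T'(1) unfolding bij_betw_def by blast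
    then have "c v (h a) (p a) = 0" using z a by simp
    then have "(\<Prod>a\<in>{1..k}. c v (h a) (p a)) = 0" using a(1) by (intro prod_zero) auto
    then show "of_int (sign p) * (\<Prod>a\<in>{1..k}. c v (h a) (p a)) = 0" by simp
  qed
  then show False using ne by simp
qed

theorem proposition2p18:
  fixes V :: "'v set" and adj :: "'v \<Rightarrow> 'v \<Rightarrow> bool" and d :: "'v \<Rightarrow> 'v \<Rightarrow> nat"
    and \<alpha> :: "'v \<Rightarrow> 'v \<Rightarrow> 'v \<Rightarrow> nat" and c :: "'v \<Rightarrow> 'v \<Rightarrow> nat \<Rightarrow> complex"
    and g :: "'v \<Rightarrow> nat \<Rightarrow> 'v series"
  assumes "splice_diagram V adj d"
    and "edge_determinant_condition V adj d"
    and "semigroup_condition V adj d"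
    and "splice_type_system V adj d \<alpha> c g"
    and "u \<in> nodes V adj" and "v \<in> nodes V adj"
    and "i \<in> {1..valency adj v - 2}"
  shows "(u = v \<longrightarrow>
            in_form (wdot V adj d u) (F_series V adj \<alpha> c g v i) = fpart V adj \<alpha> c v i)
       \<and> (u \<noteq> v \<longrightarrow>
            (\<exists>!x. x \<in> nbrs adj v \<and> x \<in> geod V adj v u) \<and>
            (\<forall>x. x \<in> nbrs adj v \<and> x \<in> geod V adj v u \<longrightarrow>
               in_form (wdot V adj d u) (F_series V adj \<alpha> c g v i)
                 = (\<lambda>m. fpart V adj \<alpha> c v i m - mono_series (mexp V adj \<alpha> v x) (c v x i) m)))"
proof -
  have tr: "is_tree V adj" and dp: "\<And>w y. w \<in> nodes V adj \<Longrightarrow> adj w y \<Longrightarrow> d w y > 0"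
    using assms(1) unfolding splice_diagram_def nbrs_def by auto
  interpret sd V adj d using tr dp by unfold_locales auto
  have alpha: "\<And>v x. v \<in> N \<Longrightarrow> adj v x \<Longrightarrow> dv adj d v = (\<Sum>l\<in>Lset V adj v x. \<alpha> v x l * L v l)"
    using assms(4) unfolding splice_type_system_def nbrs_def by auto
  have ed: "\<And>x y. x \<in> N \<Longrightarrow> y \<in> N \<Longrightarrow> adj x y \<Longrightarrow> L x y < d x y * d y x"
    using assms(2) unfolding edge_determinant_condition_def by auto
  have mm: "max_minors_nonzero adj c v" using assms(4,6) unfolding splice_type_system_def by auto
  have Gv: "\<And>m. g v i m \<noteq> 0 \<Longrightarrow> wdot V adj d v m > dv adj d v \<and> (\<forall>u\<in>N. u \<noteq> v \<longrightarrow> wdot V adj d u m > L u v)"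
    using assms(4,6,7) unfolding splice_type_system_def g_admissible_def by blast
  have Fe: "F_series V adj \<alpha> c g v i = (\<lambda>m. (\<Sum>x\<in>nbrs adj v. mono_series (mexp V adj \<alpha> v x) (c v x i) m) + g v i m)"
    unfolding F_series_def fpart_def ..
  have fin: "finite (nbrs adj v)" using fin_nbrs .
  have inj: "inj_on (mexp V adj \<alpha> v) (nbrs adj v)" using mexp_inj[OF alpha assms(6)] .
  have val: "valency adj v = card (nbrs adj v)" unfolding valency_def ..
  have P1: "in_form (wdot V adj d u) (F_series V adj \<alpha> c g v i) = fpart V adj \<alpha> c v i" if uv: "u = v"
  proof -
    have ex: "\<exists>x\<in>nbrs adj v. c v x i \<noteq> 0"
      using minor_col[OF mm assms(7) _ fin] val by simp
    have "in_form (wdot V adj d v) (F_series V adj \<alpha> c g v i) = (\<lambda>m. \<Sum>x\<in>nbrs adj v. mono_series (mexp V adj \<alpha> v x) (c v x i) m)"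
      unfolding Fe
    proof (rule generic[OF fin order_refl inj])
      show "\<And>x. x \<in> nbrs adj v \<Longrightarrow> wdot V adj d v (mexp V adj \<alpha> v x) = dv adj d v"
        using W_self[OF alpha assms(6)] unfolding nbrs_def by auto
      show "\<And>x. x \<in> nbrs adj v - nbrs adj v \<Longrightarrow> dv adj d v < wdot V adj d v (mexp V adj \<alpha> v x)" by simp
      show "\<And>m. g v i m \<noteq> 0 \<Longrightarrow> dv adj d v < wdot V adj d v m" using Gv by blast
      show "\<exists>x\<in>nbrs adj v. c v x i \<noteq> 0" using ex .
    qed
    then show ?thesis using uv unfolding fpart_def by simp
  qed
  have P2: "(\<exists>!x. x \<in> nbrs adj v \<and> x \<in> geod V adj v u) \<and>
            (\<forall>x. x \<in> nbrs adj v \<and> x \<in> geod V adj v u \<longrightarrow>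
               in_form (wdot V adj d u) (F_series V adj \<alpha> c g v i)
                 = (\<lambda>m. fpart V adj \<alpha> c v i m - mono_series (mexp V adj \<alpha> v x) (c v x i) m))" if uv: "u \<noteq> v"
  proof -
    have uV: "u \<in> V" and vV: "v \<in> V" using assms(5,6) NV by auto
    define x0 where "x0 = P v u ! 1"
    note st = step_node[OF assms(6,5) not_sym[OF uv], folded x0_def]
    have char: "x \<in> nbrs adj v \<and> x \<in> geod V adj v u \<longleftrightarrow> x = x0" for x
      using P_nb_unique[OF vV uV, of x] st unfolding nbrs_def geod_P x0_def by auto
    have x0n: "x0 \<in> nbrs adj v" using st(2) unfolding nbrs_def by simp
    have ex: "\<exists>x\<in>nbrs adj v - {x0}. c v x i \<noteq> 0"
    proof (rule minor_col[OF mm assms(7)])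
      show "nbrs adj v - {x0} \<subseteq> nbrs adj v" by blast
      show "finite (nbrs adj v - {x0})" using fin by simp
      show "valency adj v - 2 \<le> card (nbrs adj v - {x0})" using val x0n fin by simp
    qed
    have IF: "in_form (wdot V adj d u) (F_series V adj \<alpha> c g v i) = (\<lambda>m. \<Sum>x\<in>nbrs adj v - {x0}. mono_series (mexp V adj \<alpha> v x) (c v x i) m)"
      unfolding Fe
    proof (rule generic[OF fin _ inj])
      show "nbrs adj v - {x0} \<subseteq> nbrs adj v" by blast
      show "\<And>x. x \<in> nbrs adj v - {x0} \<Longrightarrow> wdot V adj d u (mexp V adj \<alpha> v x) = L u v"
        using W_other[OF alpha assms(5,6) uv] unfolding nbrs_def x0_def by auto
      show "\<And>x. x \<in> nbrs adj v - (nbrs adj v - {x0}) \<Longrightarrow> L u v < wdot V adj d u (mexp V adj \<alpha> v x)"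
        using W_toward[OF alpha ed assms(5,6) uv st(2)] x0_def by auto
      show "\<And>m. g v i m \<noteq> 0 \<Longrightarrow> L u v < wdot V adj d u m" using Gv assms(5) uv by blast
      show "\<exists>x\<in>nbrs adj v - {x0}. c v x i \<noteq> 0" using ex .
    qed
    have "in_form (wdot V adj d u) (F_series V adj \<alpha> c g v i)
                 = (\<lambda>m. fpart V adj \<alpha> c v i m - mono_series (mexp V adj \<alpha> v x0) (c v x0 i) m)"
    proof
      fix m
      have "fpart V adj \<alpha> c v i m = mono_series (mexp V adj \<alpha> v x0) (c v x0 i) m + (\<Sum>x\<in>nbrs adj v - {x0}. mono_series (mexp V adj \<alpha> v x) (c v x i) m)"
        unfolding fpart_def using sum.remove[OF fin x0n] by blast
      then show "in_form (wdot V adj d u) (F_series V adj \<alpha> c g v i) m = fpart V adj \<alpha> c v i m - mono_series (mexp V adj \<alpha> v x0) (c v x0 i) m"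
        unfolding IF by simp
    qed
    then show ?thesis unfolding char by auto
  qed
  show ?thesis using P1 P2 by blast
qed

end
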